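(* Let $\mathbf{u}=(u_1,u_2),\mathbf{v}=(v_1,v_2)\in\mathbb{R}^2$ be fixed linearly independent unit vectors, and let $D_1\subset\mathbb{R}^2$ be an open disc centered at the origin. Let $\mathbf{f}=(f_1,f_2)$ be a vector field on $\mathbb{R}^2$ with $f_1,f_2\in C^2_c(D_1)$. Then $$\operatorname{curl}\mathbf{f}=\frac{1}{\det(\mathbf{v},\mathbf{u})}\,D_{\mathbf{u}}D_{\mathbf{v}}\,\mathcal{L}\mathbf{f},$$ where $\det(\mathbf{v},\mathbf{u})=v_1u_2-u_1v_2$. In particular, the operator $\mathcal{L}$ is injective (invertible) on compactly supported (in $D_1$, with $C^2$ components) divergence-free vector fields.
   Context: For a function $h$ on $\mathbb{R}^2$ and a unit vector $\mathbf{u}$, $\mathcal{X}_{\mathbf{u}}h(\mathbf{x})=\int_0^\infty h(\mathbf{x}+t\mathbf{u})\,dt$ and $D_{\mathbf{u}}h=\mathbf{u}\cdot\nabla h$ is the directional derivative. The longitudinal V-line transform is $\mathcal{L}\mathbf{f}=-\mathcal{X}_{\mathbf{u}}(\mathbf{f}\cdot\mathbf{u})+\mathcal{X}_{\mathbf{v}}(\mathbf{f}\cdot\mathbf{v})$, a function on $\mathbb{R}^2$. In 2D, $\operatorname{curl}\mathbf{f}=\frac{\partial f_2}{\partial x_1}-\frac{\partial f_1}{\partial x_2}$. *)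

theory Defs
  imports "HOL-Analysis.Analysis"
begin

definition dir_deriv :: "real^2 \<Rightarrow> (real^2 \<Rightarrow> real) \<Rightarrow> real^2 \<Rightarrow> real" where
  "dir_deriv u h x = frechet_derivative h (at x) u"

definition partial :: "2 \<Rightarrow> (real^2 \<Rightarrow> real) \<Rightarrow> real^2 \<Rightarrow> real" where
  "partial i h x = frechet_derivative h (at x) (axis i 1)"

definition curl2 :: "(real^2 \<Rightarrow> real^2) \<Rightarrow> real^2 \<Rightarrow> real" where
  "curl2 f x = partial 1 (\<lambda>y. f y $ 2) x - partial 2 (\<lambda>y. f y $ 1) x"

definition div2 :: "(real^2 \<Rightarrow> real^2) \<Rightarrow> real^2 \<Rightarrow> real" where
  "div2 f x = partial 1 (\<lambda>y. f y $ 1) x + partial 2 (\<lambda>y. f y $ 2) x"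

definition ray_transform :: "real^2 \<Rightarrow> (real^2 \<Rightarrow> real) \<Rightarrow> real^2 \<Rightarrow> real" where
  "ray_transform u h x = integral {0..} (\<lambda>t::real. h (x + t *\<^sub>R u))"

definition LVT :: "real^2 \<Rightarrow> real^2 \<Rightarrow> (real^2 \<Rightarrow> real^2) \<Rightarrow> real^2 \<Rightarrow> real" where
  "LVT u v f x = - ray_transform u (\<lambda>y. f y \<bullet> u) x + ray_transform v (\<lambda>y. f y \<bullet> v) x"

definition C2 :: "(real^2 \<Rightarrow> real) \<Rightarrow> bool" where
  "C2 g \<longleftrightarrow> (\<exists>D :: real^2 \<Rightarrow> ((real^2) \<Rightarrow>\<^sub>L real). \<exists>D2 :: real^2 \<Rightarrow> ((real^2) \<Rightarrow>\<^sub>L ((real^2) \<Rightarrow>\<^sub>L real)).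
      (\<forall>x. (g has_derivative blinfun_apply (D x)) (at x)) \<and>
      (\<forall>x. (D has_derivative blinfun_apply (D2 x)) (at x)) \<and>
      continuous_on UNIV D2)"

definition C2c_on :: "(real^2) set \<Rightarrow> (real^2 \<Rightarrow> real) \<Rightarrow> bool" where
  "C2c_on S g \<longleftrightarrow> C2 g \<and> compact (closure {x. g x \<noteq> 0}) \<and> closure {x. g x \<noteq> 0} \<subseteq> S"

definition det2 :: "real^2 \<Rightarrow> real^2 \<Rightarrow> real" where
  "det2 v u = v$1 * u$2 - u$1 * v$2"

end

theory Submission
  imports Defs "HOL-Complex_Analysis.Cauchy_Integral_Formula"
begin

lemma int_restrict0:
  fixes g :: "real \<Rightarrow> real"
  assumes c: "continuous_on (cbox 0 T) g" and z: "\<And>t. t \<ge> T \<Longrightarrow> g t = 0"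
  shows "integral {0..} g = integral (cbox 0 T) g"
proof -
  have "(g has_integral integral (cbox 0 T) g) (cbox 0 T)"
    using integrable_continuous[OF c] by (simp add: integrable_integral)
  then have "((\<lambda>x. if x \<in> cbox 0 T then g x else 0) has_integral integral (cbox 0 T) g) {0..}"
    by (subst has_integral_restrict) auto
  then have "(g has_integral integral (cbox 0 T) g) {0..}"
    by (rule has_integral_cong[THEN iffD1, rotated]) (auto simp: z)
  then show ?thesis by (rule integral_unique)
qed

lemma ray_restrict:
  fixes \<psi> :: "real^2 \<Rightarrow> real"
  assumes u: "norm u = 1" and c: "continuous_on UNIV \<psi>"
    and s: "\<And>x. R \<le> norm x \<Longrightarrow> \<psi> x = 0"
    and T: "R + norm x \<le> T"
  shows "ray_transform u \<psi> x = integral (cbox 0 T) (\<lambda>t. \<psi> (x + t *\<^sub>R u))"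
  unfolding ray_transform_def
proof (rule int_restrict0)
  show "continuous_on (cbox 0 T) (\<lambda>t. \<psi> (x + t *\<^sub>R u))"
    by (intro continuous_on_compose2[OF c] continuous_intros) auto
  fix t :: real assume t: "T \<le> t"
  have "norm (t *\<^sub>R u) \<le> norm x + norm (x + t *\<^sub>R u)"
    using norm_triangle_ineq4[of "x + t *\<^sub>R u" x] by simp
  moreover have "t \<le> norm (t *\<^sub>R u)" using u by simp
  ultimately show "\<psi> (x + t *\<^sub>R u) = 0" using t T by (intro s) linarith
qed

lemma supp_deriv:
  fixes \<psi> :: "real^2 \<Rightarrow> real"
  assumes d: "\<And>x. (\<psi> has_derivative blinfun_apply (D x)) (at x)"
    and s: "\<And>x. R \<le> norm x \<Longrightarrow> \<psi> x = 0"
  shows "\<And>x. R + 1 \<le> norm x \<Longrightarrow> D x = 0"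
proof -
  fix x :: "real^2" assume x: "R + 1 \<le> norm x"
  have "((\<lambda>_. 0) has_derivative (\<lambda>_. 0)) (at x)" by simp
  then have "(\<psi> has_derivative (\<lambda>_. 0)) (at x)"
  proof (rule has_derivative_transform_within_open[where s="ball x 1"])
    show "open (ball x 1)" by simp
    show "x \<in> ball x 1" by simp
    fix y assume "y \<in> ball x 1"
    then have "norm (x - y) < 1" by (simp add: dist_norm)
    then have "R \<le> norm y" using x norm_triangle_ineq2[of x y] by linarith
    then show "0 = \<psi> y" using s by simp
  qed
  then have "blinfun_apply (D x) = (\<lambda>_. 0)" using d[of x] has_derivative_unique by blast
  then show "D x = 0" by (intro blinfun_eqI) simp
qed

lemma ray_deriv:
  fixes \<psi> :: "real^2 \<Rightarrow> real" and D :: "real^2 \<Rightarrow> ((real^2) \<Rightarrow>\<^sub>L real)"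
  assumes u: "norm u = 1"
   and d: "\<And>x. (\<psi> has_derivative blinfun_apply (D x)) (at x)"
   and cD: "continuous_on UNIV D"
   and s: "\<And>x. R \<le> norm x \<Longrightarrow> \<psi> x = 0"
  shows "(ray_transform u \<psi> has_derivative (\<lambda>w. ray_transform u (\<lambda>y. D y w) x0)) (at x0)"
proof -
  have sD: "\<And>x. \<bar>R\<bar> + 1 \<le> norm x \<Longrightarrow> D x = 0"
    using supp_deriv[OF d, of R] s by force
  have s': "\<And>x. \<bar>R\<bar> + 1 \<le> norm x \<Longrightarrow> \<psi> x = 0" using s by force
  define T where "T = \<bar>R\<bar> + 1 + norm x0 + 1"
  have c\<psi>: "continuous_on UNIV \<psi>"
    using d has_derivative_continuous continuous_at_imp_continuous_on by blast
  define U where "U = ball x0 1"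
  have eq: "ray_transform u \<psi> x = integral (cbox 0 T) (\<lambda>t. \<psi> (x + t *\<^sub>R u))" if "x \<in> U" for x
  proof (rule ray_restrict[OF u c\<psi> s'])
    have "norm x \<le> norm x0 + 1" using that norm_triangle_ineq2[of x x0] by (simp add: U_def dist_norm norm_minus_commute)
    then show "\<bar>R\<bar> + 1 + norm x \<le> T" by (simp add: T_def)
  qed
  have cfx: "continuous_on (U \<times> cbox 0 T) (\<lambda>(x, t). D (x + t *\<^sub>R u))"
    unfolding case_prod_beta
    by (rule continuous_on_compose2[OF cD]) (auto intro!: continuous_intros simp: case_prod_beta)
  have L: "((\<lambda>x. integral (cbox 0 T) (\<lambda>t. \<psi> (x + t *\<^sub>R u))) has_derivative
      blinfun_apply (integral (cbox 0 T) (\<lambda>t. D (x0 + t *\<^sub>R u)))) (at x0 within U)"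
  proof (rule leibniz_rule[where fx="\<lambda>x t. D (x + t *\<^sub>R u)" and f="\<lambda>x t. \<psi> (x + t *\<^sub>R u)", OF _ _ cfx])
    fix x t assume "x \<in> U" "t \<in> cbox (0::real) T"
    show "((\<lambda>x. \<psi> (x + t *\<^sub>R u)) has_derivative blinfun_apply (D (x + t *\<^sub>R u))) (at x within U)"
      using has_derivative_compose[OF has_derivative_add[OF has_derivative_ident has_derivative_const] d] by simp
  next
    fix x assume "x \<in> U"
    show "(\<lambda>t. \<psi> (x + t *\<^sub>R u)) integrable_on cbox 0 T"
      by (intro integrable_continuous continuous_on_compose2[OF c\<psi>] continuous_intros) auto
  qed (auto simp: U_def)
  have L2: "((\<lambda>x. integral (cbox 0 T) (\<lambda>t. \<psi> (x + t *\<^sub>R u))) has_derivative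
      blinfun_apply (integral (cbox 0 T) (\<lambda>t. D (x0 + t *\<^sub>R u)))) (at x0)"
    proof -
    have "at x0 within U = at x0" by (rule at_within_open) (auto simp: U_def)
    then show ?thesis using L by simp
  qed
  have L3: "(ray_transform u \<psi> has_derivative
      blinfun_apply (integral (cbox 0 T) (\<lambda>t. D (x0 + t *\<^sub>R u)))) (at x0)"
    by (rule has_derivative_transform_within_open[OF L2, of U]) (auto simp: U_def eq)
  have cD0: "continuous_on (cbox 0 T) (\<lambda>t. D (x0 + t *\<^sub>R u))"
    by (rule continuous_on_compose2[OF cD]) (auto intro!: continuous_intros simp: case_prod_beta)
  have "blinfun_apply (integral (cbox 0 T) (\<lambda>t. D (x0 + t *\<^sub>R u))) w = ray_transform u (\<lambda>y. D y w) x0" for w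
  proof -
    have "blinfun_apply (integral (cbox 0 T) (\<lambda>t. D (x0 + t *\<^sub>R u))) w =
       integral (cbox 0 T) (\<lambda>t. D (x0 + t *\<^sub>R u) w)"
      by (rule blinfun_apply_integral[OF integrable_continuous[OF cD0]])
    also have "\<dots> = ray_transform u (\<lambda>y. D y w) x0"
    proof (rule ray_restrict[OF u, symmetric])
      show "continuous_on UNIV (\<lambda>y. blinfun_apply (D y) w)"
        by (intro continuous_intros cD)
      show "\<And>x. \<bar>R\<bar> + 1 \<le> norm x \<Longrightarrow> blinfun_apply (D x) w = 0" using sD by simp
      show "\<bar>R\<bar> + 1 + norm x0 \<le> T" by (simp add: T_def)
    qed
    finally show ?thesis .
  qed
  then have "blinfun_apply (integral (cbox 0 T) (\<lambda>t. D (x0 + t *\<^sub>R u))) = (\<lambda>w. ray_transform u (\<lambda>y. D y w) x0)" by (intro ext)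
  then show ?thesis using L3 by simp
qed



lemma ray_self:
  fixes \<psi> :: "real^2 \<Rightarrow> real" and D :: "real^2 \<Rightarrow> ((real^2) \<Rightarrow>\<^sub>L real)"
  assumes u: "norm u = 1"
   and d: "\<And>x. (\<psi> has_derivative blinfun_apply (D x)) (at x)"
   and cD: "continuous_on UNIV D"
   and s: "\<And>x. R \<le> norm x \<Longrightarrow> \<psi> x = 0"
  shows "ray_transform u (\<lambda>y. D y u) x = - \<psi> x"
proof -
  have sD: "\<And>x. \<bar>R\<bar> + 1 \<le> norm x \<Longrightarrow> D x = 0"
    using supp_deriv[OF d, of R] s by force
  define T where "T = \<bar>R\<bar> + 1 + norm x"
  have "ray_transform u (\<lambda>y. D y u) x = integral (cbox 0 T) (\<lambda>t. D (x + t *\<^sub>R u) u)"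
  proof (rule ray_restrict[OF u])
    show "continuous_on UNIV (\<lambda>y. blinfun_apply (D y) u)"
      by (intro continuous_intros cD)
    show "\<And>x. \<bar>R\<bar> + 1 \<le> norm x \<Longrightarrow> blinfun_apply (D x) u = 0" using sD by simp
    show "\<bar>R\<bar> + 1 + norm x \<le> T" by (simp add: T_def)
  qed
  also have "\<dots> = \<psi> (x + T *\<^sub>R u) - \<psi> (x + 0 *\<^sub>R u)"
  proof -
    have "((\<lambda>t. D (x + t *\<^sub>R u) u) has_integral (\<psi> (x + T *\<^sub>R u) - \<psi> (x + 0 *\<^sub>R u))) {0..T}"
    proof (rule fundamental_theorem_of_calculus)
      show "0 \<le> T" by (simp add: T_def)
      fix t assume "t \<in> {0..T}"
      have "((\<lambda>t. \<psi> (x + t *\<^sub>R u)) has_derivative (\<lambda>h. D (x + t *\<^sub>R u) (0 + h *\<^sub>R u))) (at t within {0..T})"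
        by (rule has_derivative_compose[OF has_derivative_add[OF has_derivative_const has_derivative_scaleR_left[OF has_derivative_ident]] d])
      then show "((\<lambda>t. \<psi> (x + t *\<^sub>R u)) has_vector_derivative D (x + t *\<^sub>R u) u) (at t within {0..T})"
        by (simp add: has_vector_derivative_def blinfun.scaleR_right)
    qed
    then show ?thesis by (simp add: integral_unique)
  qed
  also have "\<psi> (x + T *\<^sub>R u) = 0"
  proof (rule s)
    have "norm (T *\<^sub>R u) \<le> norm x + norm (x + T *\<^sub>R u)"
      using norm_triangle_ineq4[of "x + T *\<^sub>R u" x] by simp
    moreover have "norm (T *\<^sub>R u) = T" using u by (simp add: T_def)
    moreover have "T = \<bar>R\<bar> + 1 + norm x" by (simp add: T_def)
    ultimately show "R \<le> norm (x + T *\<^sub>R u)" by linarith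
  qed
  finally show ?thesis by simp
qed

definition C2d :: "(real^2 \<Rightarrow> real) \<Rightarrow> (real^2 \<Rightarrow> ((real^2) \<Rightarrow>\<^sub>L real)) \<Rightarrow> (real^2 \<Rightarrow> ((real^2) \<Rightarrow>\<^sub>L ((real^2) \<Rightarrow>\<^sub>L real))) \<Rightarrow> bool" where
  "C2d g D E \<longleftrightarrow> (\<forall>x. (g has_derivative blinfun_apply (D x)) (at x)) \<and>
      (\<forall>x. (D has_derivative blinfun_apply (E x)) (at x)) \<and> continuous_on UNIV E"

lemma C2_C2d: "C2 g \<Longrightarrow> \<exists>D E. C2d g D E"
  unfolding C2_def C2d_def by (elim exE) (intro exI)

lemma C2d_lin:
  assumes "C2d g1 D1 E1" "C2d g2 D2 E2"
  shows "C2d (\<lambda>x. a * g1 x + b * g2 x) (\<lambda>x. a *\<^sub>R D1 x + b *\<^sub>R D2 x) (\<lambda>x. a *\<^sub>R E1 x + b *\<^sub>R E2 x)"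
proof -
  have d1: "\<And>x. (g1 has_derivative blinfun_apply (D1 x)) (at x)" and e1: "\<And>x. (D1 has_derivative blinfun_apply (E1 x)) (at x)"
    and c1: "continuous_on UNIV E1" using assms(1) unfolding C2d_def by simp_all
  have d2: "\<And>x. (g2 has_derivative blinfun_apply (D2 x)) (at x)" and e2: "\<And>x. (D2 has_derivative blinfun_apply (E2 x)) (at x)"
    and c2: "continuous_on UNIV E2" using assms(2) unfolding C2d_def by simp_all
  have "((\<lambda>x. a * g1 x + b * g2 x) has_derivative blinfun_apply (a *\<^sub>R D1 x + b *\<^sub>R D2 x)) (at x)" for x
    by (rule has_derivative_eq_rhs[OF has_derivative_add[OF has_derivative_mult_right[OF d1] has_derivative_mult_right[OF d2]]])
      (simp add: fun_eq_iff blinfun.add_left blinfun.scaleR_left)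
  moreover have "((\<lambda>x. a *\<^sub>R D1 x + b *\<^sub>R D2 x) has_derivative blinfun_apply (a *\<^sub>R E1 x + b *\<^sub>R E2 x)) (at x)" for x
    by (rule has_derivative_eq_rhs[OF has_derivative_add[OF has_derivative_scaleR_right[OF e1] has_derivative_scaleR_right[OF e2]]])
      (simp add: fun_eq_iff blinfun.add_left blinfun.scaleR_left)
  moreover have "continuous_on UNIV (\<lambda>x. a *\<^sub>R E1 x + b *\<^sub>R E2 x)"
    using c1 c2 by (intro continuous_on_add continuous_on_scaleR continuous_on_const)
  ultimately show ?thesis unfolding C2d_def by blast
qed

lemma C2d_contD: "C2d g D E \<Longrightarrow> continuous_on UNIV D"
  unfolding C2d_def by (intro continuous_at_imp_continuous_on ballI) (auto intro: has_derivative_continuous)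

definition evb :: "real^2 \<Rightarrow> ((real^2) \<Rightarrow>\<^sub>L real) \<Rightarrow>\<^sub>L real" where
  "evb v = Blinfun (\<lambda>L. blinfun_apply L v)"

lemma evb_apply[simp]: "blinfun_apply (evb v) L = L v"
  unfolding evb_def by (simp add: bounded_linear_Blinfun_apply)

lemma C2d_dir:
  assumes "C2d g D E"
  shows "((\<lambda>z. D z v) has_derivative blinfun_apply (evb v o\<^sub>L E x)) (at x)"
    and "continuous_on UNIV (\<lambda>x. evb v o\<^sub>L E x)"
proof -
  have "((\<lambda>z. evb v (D z)) has_derivative (\<lambda>h. evb v (E x h))) (at x)"
    using assms unfolding C2d_def
    by (intro bounded_linear.has_derivative[OF blinfun.bounded_linear_right]) auto
  moreover have "blinfun_apply (evb v o\<^sub>L E x) = (\<lambda>h. evb v (E x h))" by (simp add: fun_eq_iff)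
  moreover have "(\<lambda>z. evb v (D z)) = (\<lambda>z. D z v)" by simp
  ultimately show "((\<lambda>z. D z v) has_derivative blinfun_apply (evb v o\<^sub>L E x)) (at x)"
    by metis
  have "continuous_on UNIV E" using assms unfolding C2d_def by blast
  then show "continuous_on UNIV (\<lambda>x. evb v o\<^sub>L E x)"
    by (intro continuous_intros)
qed

lemma vec2_decomp: "(w::real^2) = w$1 *\<^sub>R axis 1 1 + w$2 *\<^sub>R axis 2 1"
  by (simp add: vec_eq_iff forall_2 axis_def)

lemma blin2: "blinfun_apply (L :: (real^2) \<Rightarrow>\<^sub>L real) w = w$1 * L (axis 1 1) + w$2 * L (axis 2 1)"
  apply (subst vec2_decomp[of w]) 
  apply (simp only: blinfun.add_right blinfun.scaleR_right)
  by simp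

lemma supp_C2c:
  assumes "C2c_on (ball 0 r) g" "r \<le> norm x" shows "g x = 0"
proof (rule ccontr)
  assume "g x \<noteq> 0"
  then have "x \<in> closure {x. g x \<noteq> 0}" using closure_subset[of "{x. g x \<noteq> 0}"] by blast
  then have "x \<in> ball 0 r" using assms(1) unfolding C2c_on_def by blast
  then show False using assms(2) by simp
qed

lemma inner2: "(w::real^2) \<bullet> u = u$1 * w$1 + u$2 * w$2"
  unfolding inner_vec_def sum_2 by (simp add: mult.commute)

lemma dir_deriv_eq: "(h has_derivative F) (at x) \<Longrightarrow> dir_deriv w h x = F w"
  unfolding dir_deriv_def using frechet_derivative_at[of h F x] by simp

lemma partial_eq: "(h has_derivative F) (at x) \<Longrightarrow> partial i h x = F (axis i 1)"
  unfolding partial_def using frechet_derivative_at[of h F x] by simp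

lemma part1:
  fixes u v :: "real^2" and f :: "real^2 \<Rightarrow> real^2"
  assumes u: "norm u = 1" and v: "norm v = 1"
   and f1: "C2c_on (ball 0 r) (\<lambda>x. f x $ 1)" and f2: "C2c_on (ball 0 r) (\<lambda>x. f x $ 2)"
  shows "det2 v u * curl2 f x = dir_deriv u (dir_deriv v (LVT u v f)) x"
proof -
  have "C2 (\<lambda>x. f x $ 1)" using f1 unfolding C2c_on_def by simp
  from C2_C2d[OF this] obtain D1 E1 where c1: "C2d (\<lambda>x. f x $ 1) D1 E1" by blast
  have "C2 (\<lambda>x. f x $ 2)" using f2 unfolding C2c_on_def by simp
  from C2_C2d[OF this] obtain D2 E2 where c2: "C2d (\<lambda>x. f x $ 2) D2 E2" by blast
  have s1: "\<And>y. r \<le> norm y \<Longrightarrow> f y $ 1 = 0" using supp_C2c[OF f1] by blast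
  have s2: "\<And>y. r \<le> norm y \<Longrightarrow> f y $ 2 = 0" using supp_C2c[OF f2] by blast
  define a where "a = (\<lambda>y. f y \<bullet> u)"
  define b where "b = (\<lambda>y. f y \<bullet> v)"
  have a_eq: "a = (\<lambda>y. u$1 * f y $ 1 + u$2 * f y $ 2)" by (simp add: a_def inner2)
  have b_eq: "b = (\<lambda>y. v$1 * f y $ 1 + v$2 * f y $ 2)" by (simp add: b_def inner2)
  define Da where "Da = (\<lambda>x. u$1 *\<^sub>R D1 x + u$2 *\<^sub>R D2 x)"
  define Ea where "Ea = (\<lambda>x. u$1 *\<^sub>R E1 x + u$2 *\<^sub>R E2 x)"
  define Db where "Db = (\<lambda>x. v$1 *\<^sub>R D1 x + v$2 *\<^sub>R D2 x)"
  define Eb where "Eb = (\<lambda>x. v$1 *\<^sub>R E1 x + v$2 *\<^sub>R E2 x)"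
  have ca: "C2d a Da Ea" unfolding a_eq Da_def Ea_def by (rule C2d_lin[OF c1 c2])
  have cb: "C2d b Db Eb" unfolding b_eq Db_def Eb_def by (rule C2d_lin[OF c1 c2])
  have sa: "\<And>y. r \<le> norm y \<Longrightarrow> a y = 0" by (simp add: a_eq s1 s2)
  have sb: "\<And>y. r \<le> norm y \<Longrightarrow> b y = 0" by (simp add: b_eq s1 s2)
  have da: "\<And>x. (a has_derivative blinfun_apply (Da x)) (at x)" using ca unfolding C2d_def by simp
  have cDa: "continuous_on UNIV Da" by (rule C2d_contD[OF ca])
  have db: "\<And>x. (b has_derivative blinfun_apply (Db x)) (at x)" using cb unfolding C2d_def by simp
  have cDb: "continuous_on UNIV Db" by (rule C2d_contD[OF cb])
  have L: "LVT u v f = (\<lambda>x. - ray_transform u a x + ray_transform v b x)"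
    by (simp add: fun_eq_iff LVT_def a_def b_def)
  have dv: "dir_deriv v (LVT u v f) = (\<lambda>y. - ray_transform u (\<lambda>z. Da z v) y - b y)"
  proof (rule ext)
    fix y
    have "(LVT u v f has_derivative (\<lambda>w. - ray_transform u (\<lambda>z. Da z w) y + ray_transform v (\<lambda>z. Db z w) y)) (at y)"
      unfolding L by (intro has_derivative_add has_derivative_minus ray_deriv[OF u da cDa sa] ray_deriv[OF v db cDb sb])
    then have "dir_deriv v (LVT u v f) y = - ray_transform u (\<lambda>z. Da z v) y + ray_transform v (\<lambda>z. Db z v) y"
      by (rule dir_deriv_eq)
    also have "ray_transform v (\<lambda>z. Db z v) y = - b y" by (rule ray_self[OF v db cDb sb])
    finally show "dir_deriv v (LVT u v f) y = - ray_transform u (\<lambda>z. Da z v) y - b y" by simp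
  qed
  have d\<psi>: "\<And>x. ((\<lambda>z. Da z v) has_derivative blinfun_apply (evb v o\<^sub>L Ea x)) (at x)"
    and c\<psi>: "continuous_on UNIV (\<lambda>x. evb v o\<^sub>L Ea x)" using C2d_dir[OF ca] by auto
  have s\<psi>: "\<And>y. r + 1 \<le> norm y \<Longrightarrow> Da y v = 0" using supp_deriv[OF da sa] by simp
  have "(dir_deriv v (LVT u v f) has_derivative (\<lambda>w. - ray_transform u (\<lambda>z. (evb v o\<^sub>L Ea z) w) x - Db x w)) (at x)"
    unfolding dv by (intro has_derivative_diff has_derivative_minus ray_deriv[OF u d\<psi> c\<psi> s\<psi>] db)
  then have "dir_deriv u (dir_deriv v (LVT u v f)) x = - ray_transform u (\<lambda>z. (evb v o\<^sub>L Ea z) u) x - Db x u"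
    by (rule dir_deriv_eq)
  also have "ray_transform u (\<lambda>z. (evb v o\<^sub>L Ea z) u) x = - Da x v" by (rule ray_self[OF u d\<psi> c\<psi> s\<psi>])
  finally have R: "dir_deriv u (dir_deriv v (LVT u v f)) x = Da x v - Db x u" by simp
  have p1: "partial i (\<lambda>y. f y $ 1) x = D1 x (axis i 1)" for i
  proof -
    have "((\<lambda>y. f y $ 1) has_derivative blinfun_apply (D1 x)) (at x)" using c1 unfolding C2d_def by simp
    then have "blinfun_apply (D1 x) = frechet_derivative (\<lambda>y. f y $ 1) (at x)" by (rule frechet_derivative_at)
    then show ?thesis unfolding partial_def by simp
  qed
  have p2: "partial i (\<lambda>y. f y $ 2) x = D2 x (axis i 1)" for i
  proof -
    have "((\<lambda>y. f y $ 2) has_derivative blinfun_apply (D2 x)) (at x)" using c2 unfolding C2d_def by simp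
    then have "blinfun_apply (D2 x) = frechet_derivative (\<lambda>y. f y $ 2) (at x)" by (rule frechet_derivative_at)
    then show ?thesis unfolding partial_def by simp
  qed
  have A1: "D1 x v = v$1 * D1 x (axis 1 1) + v$2 * D1 x (axis 2 1)" by (rule blin2)
  have A2: "D2 x v = v$1 * D2 x (axis 1 1) + v$2 * D2 x (axis 2 1)" by (rule blin2)
  have A3: "D1 x u = u$1 * D1 x (axis 1 1) + u$2 * D1 x (axis 2 1)" by (rule blin2)
  have A4: "D2 x u = u$1 * D2 x (axis 1 1) + u$2 * D2 x (axis 2 1)" by (rule blin2)
  show ?thesis
    unfolding R curl2_def p1 p2 Da_def Db_def det2_def blinfun.add_left blinfun.scaleR_left A1 A2 A3 A4
    by (simp add: algebra_simps)
qed

lemma det_nz: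
  fixes u v :: "real^2"
  assumes v: "norm v = 1" and uv: "u \<noteq> v" and ind: "independent {u, v}"
  shows "det2 v u \<noteq> 0"
proof
  assume d: "det2 v u = 0"
  have v0: "v$1 \<noteq> 0 \<or> v$2 \<noteq> 0"
  proof (rule ccontr)
    assume "\<not> (v$1 \<noteq> 0 \<or> v$2 \<noteq> 0)"
    then have "v = 0" by (simp add: vec_eq_iff forall_2)
    then show False using v by simp
  qed
  define c where "c = (if v$1 \<noteq> 0 then u$1 / v$1 else u$2 / v$2)"
  have "u = c *\<^sub>R v"
    using d v0 unfolding det2_def c_def
    by (auto simp: vec_eq_iff forall_2 field_simps)
  then have "u \<in> span {v}" by (simp add: span_base span_scale)
  moreover have "u \<notin> span {v}" using ind uv by (simp add: independent_insert)
  ultimately show False by blast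
qed

definition toV :: "complex \<Rightarrow> real^2" where
  "toV z = Re z *\<^sub>R axis 1 1 + Im z *\<^sub>R axis 2 1"

lemma toV_comp[simp]: "toV z $ 1 = Re z" "toV z $ 2 = Im z"
  by (simp_all add: toV_def axis_def)

lemma bl_toV: "bounded_linear toV"
  unfolding toV_def
  by (intro bounded_linear_add bounded_linear_compose[OF bounded_linear_scaleR_left] bounded_linear_Re bounded_linear_Im)

lemma norm_toV: "norm (toV z) = cmod z"
proof -
  have "norm (toV z) = sqrt (toV z \<bullet> toV z)" by (rule norm_eq_sqrt_inner)
  also have "\<dots> = sqrt ((Re z)\<^sup>2 + (Im z)\<^sup>2)" by (simp add: inner2 power2_eq_square)
  also have "\<dots> = cmod z" by (simp add: norm_complex_def)
  finally show ?thesis .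
qed

lemma liou:
  fixes h1 h2 :: "real^2 \<Rightarrow> real"
  assumes dh1: "\<And>x. (h1 has_derivative blinfun_apply (H1 x)) (at x)"
    and dh2: "\<And>x. (h2 has_derivative blinfun_apply (H2 x)) (at x)"
    and cr1: "\<And>x. H1 x (axis 2 1) = H2 x (axis 1 1)"
    and cr2: "\<And>x. H1 x (axis 1 1) = - H2 x (axis 2 1)"
    and s: "\<And>x. R \<le> norm x \<Longrightarrow> h1 x = 0 \<and> h2 x = 0"
  shows "h1 p = 0 \<and> h2 p = 0"
proof -
  define F where "F z = complex_of_real (h1 (toV z)) - \<i> * complex_of_real (h2 (toV z))" for z
  have dV: "(toV has_derivative toV) (at z)" for z by (rule bounded_linear_imp_has_derivative[OF bl_toV])
  have hol: "F holomorphic_on UNIV"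
    unfolding holomorphic_on_def field_differentiable_def has_field_derivative_def
  proof (intro ballI exI)
    fix z :: complex
    define q where "q = toV z"
    define c where "c = complex_of_real (H1 q (axis 1 1)) - \<i> * complex_of_real (H2 q (axis 1 1))"
    have "(F has_derivative (\<lambda>w. complex_of_real (H1 q (toV w)) - \<i> * complex_of_real (H2 q (toV w)))) (at z)"
      unfolding F_def q_def
      by (intro has_derivative_diff has_derivative_mult_right has_derivative_of_real
          has_derivative_compose[OF dV dh1] has_derivative_compose[OF dV dh2])
    moreover have "(\<lambda>w. complex_of_real (H1 q (toV w)) - \<i> * complex_of_real (H2 q (toV w))) = (*) c"
    proof
      fix w
      have a: "H1 q (toV w) = Re w * H1 q (axis 1 1) + Im w * H1 q (axis 2 1)"
        using blin2[of "H1 q" "toV w"] by simp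
      have b: "H2 q (toV w) = Re w * H2 q (axis 1 1) + Im w * H2 q (axis 2 1)"
        using blin2[of "H2 q" "toV w"] by simp
      show "complex_of_real (H1 q (toV w)) - \<i> * complex_of_real (H2 q (toV w)) = c * w"
        unfolding a b c_def
        by (rule complex_eqI) (simp_all add: cr1[of q] cr2[of q] algebra_simps)
    qed
    ultimately show "(F has_derivative (*) c) (at z within UNIV)" by simp
  qed
  have lim: "(F \<longlongrightarrow> 0) at_infinity"
  proof (rule tendsto_eventually)
    show "\<forall>\<^sub>F z in at_infinity. F z = 0"
      unfolding eventually_at_infinity
    proof (intro exI allI impI)
      fix z :: complex assume "R \<le> norm z"
      then have "h1 (toV z) = 0 \<and> h2 (toV z) = 0" using s norm_toV by simp
      then show "F z = 0" by (simp add: F_def)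
    qed
  qed
  define z where "z = Complex (p$1) (p$2)"
  have "toV z = p" by (simp add: z_def vec_eq_iff forall_2)
  moreover have "F z = 0" by (rule Liouville_weak_0[OF hol lim])
  ultimately have "complex_of_real (h1 p) - \<i> * complex_of_real (h2 p) = 0" by (simp add: F_def)
  then show ?thesis by (simp add: complex_eq_iff)
qed

lemma C2c_deriv:
  assumes "C2c_on (ball 0 r) h"
  obtains D where "\<And>x. (h has_derivative blinfun_apply (D x)) (at x)"
proof -
  have "C2 h" using assms unfolding C2c_on_def by simp
  from C2_C2d[OF this] obtain D E where "C2d h D E" by blast
  then show ?thesis using that unfolding C2d_def by blast
qed

theorem theorem3:
  fixes u v :: "real^2" and r :: real and f :: "real^2 \<Rightarrow> real^2"
  assumes "norm u = 1" and "norm v = 1"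
    and "u \<noteq> v" and "independent {u, v}"
    and "r > 0"
    and "C2c_on (ball 0 r) (\<lambda>x. f x $ 1)" and "C2c_on (ball 0 r) (\<lambda>x. f x $ 2)"
  shows "(\<forall>x. curl2 f x = (1 / det2 v u) * dir_deriv u (dir_deriv v (LVT u v f)) x)
    \<and> (\<forall>g :: real^2 \<Rightarrow> real^2.
         C2c_on (ball 0 r) (\<lambda>x. g x $ 1) \<and> C2c_on (ball 0 r) (\<lambda>x. g x $ 2) \<and>
         (\<forall>x. div2 f x = 0) \<and> (\<forall>x. div2 g x = 0) \<and> LVT u v f = LVT u v g
         \<longrightarrow> f = g)"
proof -
  have det: "det2 v u \<noteq> 0" by (rule det_nz[OF assms(2) assms(3) assms(4)])
  have P1: "curl2 f' x = (1 / det2 v u) * dir_deriv u (dir_deriv v (LVT u v f')) x"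
    if a1: "C2c_on (ball 0 r) (\<lambda>x. f' x $ 1)" and a2: "C2c_on (ball 0 r) (\<lambda>x. f' x $ 2)" for f' :: "real^2 \<Rightarrow> real^2" and x
  proof -
    have "det2 v u * curl2 f' x = dir_deriv u (dir_deriv v (LVT u v f')) x"
      by (rule part1[OF assms(1) assms(2) a1 a2])
    then show ?thesis using det by (simp add: field_simps)
  qed
  show ?thesis
  proof (intro conjI allI impI)
    fix x show "curl2 f x = (1 / det2 v u) * dir_deriv u (dir_deriv v (LVT u v f)) x"
      by (rule P1[OF assms(6) assms(7)])
  next
    fix g :: "real^2 \<Rightarrow> real^2"
    assume H: "C2c_on (ball 0 r) (\<lambda>x. g x $ 1) \<and> C2c_on (ball 0 r) (\<lambda>x. g x $ 2) \<and>
         (\<forall>x. div2 f x = 0) \<and> (\<forall>x. div2 g x = 0) \<and> LVT u v f = LVT u v g"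
    then have g1: "C2c_on (ball 0 r) (\<lambda>x. g x $ 1)" and g2: "C2c_on (ball 0 r) (\<lambda>x. g x $ 2)"
      and divf: "\<And>x. div2 f x = 0" and divg: "\<And>x. div2 g x = 0" and LL: "LVT u v f = LVT u v g"
      by auto
    have curl: "curl2 f x = curl2 g x" for x
      using P1[OF assms(6) assms(7), of x] P1[OF g1 g2, of x] LL by simp
    obtain Df1 where df1: "\<And>x. ((\<lambda>x. f x $ 1) has_derivative blinfun_apply (Df1 x)) (at x)"
      using C2c_deriv[OF assms(6)] by blast
    obtain Df2 where df2: "\<And>x. ((\<lambda>x. f x $ 2) has_derivative blinfun_apply (Df2 x)) (at x)"
      using C2c_deriv[OF assms(7)] by blast
    obtain Dg1 where dg1: "\<And>x. ((\<lambda>x. g x $ 1) has_derivative blinfun_apply (Dg1 x)) (at x)"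
      using C2c_deriv[OF g1] by blast
    obtain Dg2 where dg2: "\<And>x. ((\<lambda>x. g x $ 2) has_derivative blinfun_apply (Dg2 x)) (at x)"
      using C2c_deriv[OF g2] by blast
    have pf1: "\<And>i x. partial i (\<lambda>x. f x $ 1) x = Df1 x (axis i 1)" by (rule partial_eq[OF df1])
    have pf2: "\<And>i x. partial i (\<lambda>x. f x $ 2) x = Df2 x (axis i 1)" by (rule partial_eq[OF df2])
    have pg1: "\<And>i x. partial i (\<lambda>x. g x $ 1) x = Dg1 x (axis i 1)" by (rule partial_eq[OF dg1])
    have pg2: "\<And>i x. partial i (\<lambda>x. g x $ 2) x = Dg2 x (axis i 1)" by (rule partial_eq[OF dg2])
    have L: "(\<lambda>x. f x $ 1 - g x $ 1) p = 0 \<and> (\<lambda>x. f x $ 2 - g x $ 2) p = 0" for p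
    proof (rule liou[of "\<lambda>x. f x $ 1 - g x $ 1" "\<lambda>x. Df1 x - Dg1 x" "\<lambda>x. f x $ 2 - g x $ 2" "\<lambda>x. Df2 x - Dg2 x" r p])
      fix x
      show "((\<lambda>x. f x $ 1 - g x $ 1) has_derivative blinfun_apply (Df1 x - Dg1 x)) (at x)"
        by (rule has_derivative_eq_rhs[OF has_derivative_diff[OF df1 dg1]]) (simp add: fun_eq_iff blinfun.diff_left)
      show "((\<lambda>x. f x $ 2 - g x $ 2) has_derivative blinfun_apply (Df2 x - Dg2 x)) (at x)"
        by (rule has_derivative_eq_rhs[OF has_derivative_diff[OF df2 dg2]]) (simp add: fun_eq_iff blinfun.diff_left)
      show "blinfun_apply (Df1 x - Dg1 x) (axis 2 1) = blinfun_apply (Df2 x - Dg2 x) (axis 1 1)"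
        using curl[of x] unfolding curl2_def pf1 pf2 pg1 pg2 by (simp add: blinfun.diff_left)
      show "blinfun_apply (Df1 x - Dg1 x) (axis 1 1) = - blinfun_apply (Df2 x - Dg2 x) (axis 2 1)"
        using divf[of x] divg[of x] unfolding div2_def pf1 pf2 pg1 pg2 by (simp add: blinfun.diff_left)
    next
      fix x :: "real^2"
      assume "r \<le> norm x"
      then show "f x $ 1 - g x $ 1 = 0 \<and> f x $ 2 - g x $ 2 = 0"
        using supp_C2c[OF assms(6)] supp_C2c[OF assms(7)] supp_C2c[OF g1] supp_C2c[OF g2] by simp
    qed
    show "f = g"
    proof
      fix p
      have "f p $ 1 - g p $ 1 = 0 \<and> f p $ 2 - g p $ 2 = 0" using L[of p] by simp
      then show "f p = g p" by (simp add: vec_eq_iff forall_2)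
    qed
  qed
qed

end
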